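(* Let $a,b,c$ be parameters (real or complex numbers) such that no denominator below vanishes, and put $u(n,a,b,c)=\frac{\prod_{j=0}^{n-1}(b+jc)}{\prod_{j=0}^{n-1}(a+jc)}$. Define, for $n\ge0$, $$T(2n)=\frac{(a+(n-1)c)(b+nc)}{(a+2nc)(a+(2n-1)c)},\qquad T(2n+1)=\frac{(n+1)c\,(a-b+nc)}{(a+2nc)(a+(2n+1)c)},$$ and numbers $A(n,k)$ for integers $n\ge0$ and all integers $k$ by $$A(2n,2k)=\binom{n}{k}u(n-k,a+2kc,b+kc,c),\qquad A(2n+1,2k+1)=\binom{n}{k}u(n-k,a+(2k+1)c,b+(k+1)c,c),$$ and $A(n,k)=0$ whenever $n-k$ is odd. Then $$A(0,k)=[k=0],\qquad A(n,0)=T(0)A(n-1,1)\ (n\ge1),\qquad A(n,k)=A(n-1,k-1)+T(k)A(n-1,k+1)\ (n\ge1,\ k\ge1).$$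
   Context: $\binom{n}{k}$ is the ordinary binomial coefficient, equal to $0$ for $k<0$ or $k>n$. $[P]$ is $1$ if $P$ holds and $0$ otherwise. (For $n=0$ the factor $a-c$ cancels, so $T(0)=b/a$.) *)

theory Defs
  imports Complex_Main
begin

definition u :: "nat \<Rightarrow> 'a::field_char_0 \<Rightarrow> 'a \<Rightarrow> 'a \<Rightarrow> 'a" where
  "u n a b c = (\<Prod>j<n. b + of_nat j * c) / (\<Prod>j<n. a + of_nat j * c)"

definition ibinom :: "nat \<Rightarrow> int \<Rightarrow> nat" where
  "ibinom n k = (if k < 0 then 0 else n choose nat k)"

text \<open>T(0) = b/a (the factor a - c cancels); T(2n), T(2n+1) as in the paper.\<close>
definition T :: "'a::field_char_0 \<Rightarrow> 'a \<Rightarrow> 'a \<Rightarrow> nat \<Rightarrow> 'a" where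
  "T a b c k =
    (if k = 0 then b / a
     else if even k then
       (let n = k div 2 in
         ((a + (of_nat n - 1) * c) * (b + of_nat n * c)) /
         ((a + 2 * of_nat n * c) * (a + (2 * of_nat n - 1) * c)))
     else
       (let n = k div 2 in
         ((of_nat n + 1) * c * (a - b + of_nat n * c)) /
         ((a + 2 * of_nat n * c) * (a + (2 * of_nat n + 1) * c))))"

definition A :: "'a::field_char_0 \<Rightarrow> 'a \<Rightarrow> 'a \<Rightarrow> nat \<Rightarrow> int \<Rightarrow> 'a" where
  "A a b c n k =
    (if odd (int n - k) then 0
     else if even n then
       (let m = n div 2; l = k div 2 in
         of_nat (ibinom m l) *
         u (nat (int m - l)) (a + 2 * of_int l * c) (b + of_int l * c) c)
     else
       (let m = n div 2; l = (k - 1) div 2 in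
         of_nat (ibinom m l) *
         u (nat (int m - l)) (a + (2 * of_int l + 1) * c) (b + (of_int l + 1) * c) c))"

end

theory Submission
  imports Defs
begin

definition rp :: "'a::field_char_0 \<Rightarrow> 'a \<Rightarrow> nat \<Rightarrow> 'a" where
  "rp c x N = (\<Prod>j<N. x + of_nat j * c)"

lemma u_rp: "u n a b c = rp c b n / rp c a n" by (simp add: u_def rp_def)

lemma rp_0[simp]: "rp c x 0 = 1" by (simp add: rp_def)

lemma rp_Suc1: assumes "y = x + c" shows "rp c x (Suc N) = x * rp c y N"
  unfolding rp_def assms prod.lessThan_Suc_shift by (simp add: algebra_simps)

lemma rp_Suc2: assumes "z = x + of_nat N * c" shows "rp c x (Suc N) = rp c x N * z"
  unfolding rp_def assms by simp

lemma rp_nz: assumes nz: "\<And>m::nat. a + of_nat m * c \<noteq> 0" and "x = a + of_nat i * c"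
  shows "rp c x N \<noteq> 0"
proof -
  have "a + of_nat i * c + of_nat j * c \<noteq> 0" for j
  proof -
    have "a + of_nat i * c + of_nat j * c = a + of_nat (i+j) * c" by (simp add: algebra_simps)
    then show ?thesis using nz[of "i+j"] by argo
  qed
  then show ?thesis unfolding rp_def assms(2) by (simp add: prod_zero_iff)
qed

lemma binrel: "(M choose l) * (M - l) = (M choose Suc l) * Suc l"
  by (metis binomial_absorb_comp binomial_absorption mult.commute)

lemma A_even: "A a b c (2*m) (2*int l) = of_nat (m choose l) * u (m - l) (a + 2 * of_nat l * c) (b + of_nat l * c) c"
  by (cases "l \<le> m") (simp_all add: A_def ibinom_def nat_diff_distrib)

lemma A_odd: "A a b c (2*m+1) (2*int l+1) = of_nat (m choose l) * u (m - l) (a + (2 * of_nat l + 1) * c) (b + (of_nat l + 1) * c) c"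
  by (cases "l \<le> m") (simp_all add: A_def ibinom_def nat_diff_distrib)

lemma A_par: "odd (int n - k) \<Longrightarrow> A a b c n k = 0"
  by (simp add: A_def)

lemma alg_even:
  fixes a2L a2l1 S W R x y al bL Q :: "'a::field"
  assumes "a2L \<noteq> 0" "a2l1 \<noteq> 0" "S \<noteq> 0" "W \<noteq> 0" "a2L * R = S * W"
    and core: "(x+y)*a2l1 = x*W + al*y"
  shows "(x+y) * (bL*Q / (a2L*R)) = x * (bL*Q/(a2l1*S)) + (al*bL/(a2L*a2l1)) * (y * (Q/R))"
proof -
  have R: "R = S*W/a2L" using assms by (simp add: field_simps)
  have "(x+y) * (bL*Q / (a2L*R)) = (bL*Q/(a2l1*S*W)) * ((x+y)*a2l1)"
    using assms(1-5) unfolding R by (simp add: field_simps)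
  also have "\<dots> = (bL*Q/(a2l1*S*W)) * (x*W + al*y)" using core by simp
  also have "\<dots> = x * (bL*Q/(a2l1*S)) + (al*bL/(a2L*a2l1)) * (y * (Q/R))"
    using assms(1-5) unfolding R by (simp add: field_simps)
  finally show ?thesis .
qed

lemma alg_odd:
  fixes a2l dd S W R x y bm bl lk amb Q c :: "'a::field"
  assumes "a2l \<noteq> 0" "dd \<noteq> 0" "S \<noteq> 0" "W \<noteq> 0" "dd * R = S * W"
    and core: "x*bm*a2l = x*bl*W + lk*y*c*amb"
  shows "x*(Q*bm/(S*W)) = x*(bl*Q/(a2l*S)) + (lk*c*amb/(a2l*dd))*(y*(Q/R))"
proof -
  have R: "R = S*W/dd" using assms by (simp add: field_simps)
  have "x*(Q*bm/(S*W)) = (Q/(a2l*S*W)) * (x*bm*a2l)"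
    using assms(1-5) by (simp add: field_simps)
  also have "\<dots> = (Q/(a2l*S*W)) * (x*bl*W + lk*y*c*amb)" using core by simp
  also have "\<dots> = x*(bl*Q/(a2l*S)) + (lk*c*amb/(a2l*dd))*(y*(Q/R))"
    using assms(1-5) unfolding R by (simp add: field_simps)
  finally show ?thesis .
qed

lemma even_step:
  fixes a b c :: "'a::field_char_0"
  assumes nz: "\<And>m::nat. a + of_nat m * c \<noteq> 0"
  shows "of_nat (Suc M choose Suc l) * u (Suc M - Suc l) (a + 2 * of_nat (Suc l) * c) (b + of_nat (Suc l) * c) c
   = of_nat (M choose l) * u (M - l) (a + (2 * of_nat l + 1) * c) (b + (of_nat l + 1) * c) c
   + T a b c (2 * Suc l) * (of_nat (M choose Suc l) * u (M - Suc l) (a + (2 * of_nat (Suc l) + 1) * c) (b + (of_nat (Suc l) + 1) * c) c)"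
proof (cases "M < l")
  case True
  have z: "M choose l = 0" "M choose Suc l = 0" "Suc M choose Suc l = 0" using True by auto
  show ?thesis unfolding z by simp
next
  case False
  then obtain N where M: "M = l + N" by (metis le_add_diff_inverse not_less)
  show ?thesis
  proof (cases N)
    case 0 then show ?thesis by (simp add: M u_def)
  next
    case (Suc N')
    define L :: 'a where "L = of_nat l + 1"
    define Q where "Q = rp c (b + (L+1)*c) N'"
    define R where "R = rp c (a + (2*L+1)*c) N'"
    define S where "S = rp c (a + 2*L*c) N'"
    define W where "W = a + 2*L*c + of_nat N' * c"
    define x :: 'a where "x = of_nat (M choose l)"
    define y :: 'a where "y = of_nat (M choose Suc l)"
    have d1: "Suc M - Suc l = Suc N'" "M - l = Suc N'" "M - Suc l = N'" using M Suc by auto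
    have h1: "rp c (b + L*c) (Suc N') = (b + L*c) * Q"
      unfolding Q_def by (rule rp_Suc1) (simp add: algebra_simps)
    have h2: "rp c (a + 2*L*c) (Suc N') = (a + 2*L*c) * R"
      unfolding R_def by (rule rp_Suc1) (simp add: algebra_simps)
    have h3: "rp c (a + 2*L*c) (Suc N') = S * W"
      unfolding S_def W_def by (rule rp_Suc2) simp
    have h4: "rp c (a + (2*of_nat l+1)*c) (Suc N') = (a + (2*of_nat l+1)*c) * S"
      unfolding S_def L_def by (rule rp_Suc1) (simp add: algebra_simps)
    have nzS: "S \<noteq> 0" unfolding S_def L_def
      by (rule rp_nz[OF nz, of _ "2*l+2"]) (simp add: algebra_simps)
    have nzR: "R \<noteq> 0" unfolding R_def L_def
      by (rule rp_nz[OF nz, of _ "2*l+3"]) (simp add: algebra_simps)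
    have nzW: "W \<noteq> 0" using nz[of "2*l+2+N'"] unfolding W_def L_def by (simp add: algebra_simps)
    have nz2L: "a + 2*L*c \<noteq> 0" using nz[of "2*l+2"] unfolding L_def by (simp add: algebra_simps)
    have nz2l1: "a + (2*of_nat l+1)*c \<noteq> 0" using nz[of "2*l+1"] by (simp add: algebra_simps)
    have bin: "of_nat (Suc M choose Suc l) = x + y" unfolding x_def y_def by simp
    have rel: "x * (of_nat N' + 1) = y * L"
    proof -
      have "(M choose l) * (M - l) = (M choose Suc l) * Suc l" by (rule binrel)
      then have "real_of_nat ((M choose l) * Suc N') = of_nat ((M choose Suc l) * Suc l)" using d1 by simp
      then have "(of_nat ((M choose l) * Suc N') :: 'a) = of_nat ((M choose Suc l) * Suc l)"
        by (metis of_nat_eq_iff)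
      then show ?thesis unfolding x_def y_def L_def by (simp add: algebra_simps)
    qed
    have core: "(x+y)*(a + (2*of_nat l+1)*c) = x*W + (a + of_nat l * c)*y"
    proof -
      have "(x+y)*(a + (2*of_nat l+1)*c) - (x*W + (a + of_nat l * c)*y) = c * (y * L - x * (of_nat N' + 1))"
        unfolding W_def L_def by (simp add: algebra_simps)
      then show ?thesis using rel by simp
    qed
    have T: "T a b c (2 * Suc l) = ((a + of_nat l * c) * (b + L*c)) / ((a + 2*L*c) * (a + (2*of_nat l+1)*c))"
      unfolding T_def L_def by (simp add: algebra_simps)
    have e1: "b + of_nat (Suc l) * c = b + L*c" "a + 2 * of_nat (Suc l) * c = a + 2*L*c"
      "b + (of_nat l + 1) * c = b + L*c" "a + (2 * of_nat (Suc l) + 1) * c = a + (2*L+1)*c"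
      "b + (of_nat (Suc l) + 1) * c = b + (L+1)*c" unfolding L_def by (simp_all add: algebra_simps)
    show ?thesis
      unfolding d1 e1 u_rp T bin x_def[symmetric] y_def[symmetric]
      unfolding h1 h2 h4 Q_def[symmetric] R_def[symmetric]
      apply (rule alg_even[of "a + 2*L*c" "a + (2*of_nat l+1)*c" S W R x y "a + of_nat l * c" "b + L*c" Q])
      using nz2L nz2l1 nzS nzW h2 h3 core by auto
  qed
qed

lemma odd_step:
  fixes a b c :: "'a::field_char_0"
  assumes nz: "\<And>m::nat. a + of_nat m * c \<noteq> 0"
  shows "of_nat (m choose l) * u (m - l) (a + (2 * of_nat l + 1) * c) (b + (of_nat l + 1) * c) c
   = of_nat (m choose l) * u (m - l) (a + 2 * of_nat l * c) (b + of_nat l * c) c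
   + T a b c (2 * l + 1) * (of_nat (m choose Suc l) * u (m - Suc l) (a + 2 * of_nat (Suc l) * c) (b + of_nat (Suc l) * c) c)"
proof (cases "m < l")
  case True
  have z: "m choose l = 0" "m choose Suc l = 0" using True by auto
  show ?thesis unfolding z by simp
next
  case False
  then obtain N where M: "m = l + N" by (metis le_add_diff_inverse not_less)
  show ?thesis
  proof (cases N)
    case 0 then show ?thesis by (simp add: M u_def)
  next
    case (Suc N')
    define L :: 'a where "L = of_nat l + 1"
    define Q where "Q = rp c (b + L*c) N'"
    define R where "R = rp c (a + 2*L*c) N'"
    define S where "S = rp c (a + (2*of_nat l+1)*c) N'"
    define W where "W = a + (2*of_nat l+1)*c + of_nat N' * c"
    define bm where "bm = b + L*c + of_nat N' * c"
    define x :: 'a where "x = of_nat (m choose l)"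
    define y :: 'a where "y = of_nat (m choose Suc l)"
    have d1: "m - l = Suc N'" "m - Suc l = N'" using M Suc by auto
    have h1: "rp c (b + L*c) (Suc N') = Q * bm"
      unfolding Q_def bm_def by (rule rp_Suc2) simp
    have h2: "rp c (b + of_nat l*c) (Suc N') = (b + of_nat l*c) * Q"
      unfolding Q_def L_def by (rule rp_Suc1) (simp add: algebra_simps)
    have h3: "rp c (a + (2*of_nat l+1)*c) (Suc N') = S * W"
      unfolding S_def W_def by (rule rp_Suc2) simp
    have h3': "rp c (a + (2*of_nat l+1)*c) (Suc N') = (a + (2*of_nat l+1)*c) * R"
      unfolding R_def L_def by (rule rp_Suc1) (simp add: algebra_simps)
    have h4: "rp c (a + 2*of_nat l*c) (Suc N') = (a + 2*of_nat l*c) * S"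
      unfolding S_def by (rule rp_Suc1) (simp add: algebra_simps)
    have nzS: "S \<noteq> 0" unfolding S_def
      by (rule rp_nz[OF nz, of _ "2*l+1"]) (simp add: algebra_simps)
    have nzW: "W \<noteq> 0" using nz[of "2*l+1+N'"] unfolding W_def by (simp add: algebra_simps)
    have nz2l: "a + 2*of_nat l*c \<noteq> 0" using nz[of "2*l"] by (simp add: algebra_simps)
    have nz2l1: "a + (2*of_nat l+1)*c \<noteq> 0" using nz[of "2*l+1"] by (simp add: algebra_simps)
    have rel: "x * (of_nat N' + 1) = y * L"
    proof -
      have "(m choose l) * (m - l) = (m choose Suc l) * Suc l" by (rule binrel)
      then have "(of_nat ((m choose l) * Suc N') :: 'a) = of_nat ((m choose Suc l) * Suc l)"
        using d1 by simp
      then show ?thesis unfolding x_def y_def L_def by (simp add: algebra_simps)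
    qed
    have core: "x*bm*(a + 2*of_nat l*c) = x*(b + of_nat l*c)*W + L*y*c*(a - b + of_nat l * c)"
    proof -
      have "x*bm*(a + 2*of_nat l*c) - (x*(b + of_nat l*c)*W + L*y*c*(a - b + of_nat l * c))
          = c*(a - b + of_nat l * c)*(x * (of_nat N' + 1) - y * L)"
        unfolding W_def L_def bm_def by (simp add: algebra_simps)
      then show ?thesis using rel by simp
    qed
    have T: "T a b c (2 * l + 1) = L*c*(a - b + of_nat l * c) / ((a + 2*of_nat l*c) * (a + (2*of_nat l+1)*c))"
      unfolding T_def L_def by (simp add: algebra_simps)
    have e1: "b + of_nat (Suc l) * c = b + L*c" "a + 2 * of_nat (Suc l) * c = a + 2*L*c"
      "b + (of_nat l + 1) * c = b + L*c" unfolding L_def by (simp_all add: algebra_simps)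
    show ?thesis
      unfolding d1 e1 u_rp T x_def[symmetric] y_def[symmetric]
      unfolding h1 h2 h3 h4 Q_def[symmetric] R_def[symmetric]
      apply (rule alg_odd[where a2l="a + 2*of_nat l*c" and dd="a + (2*of_nat l+1)*c" and bl="b + of_nat l*c" and lk=L and amb="a - b + of_nat l * c"])
      using nz2l nz2l1 nzS nzW h3 h3' core by auto
  qed
qed

theorem corollary1:
  fixes a b c :: "'a::field_char_0"
  assumes nz: "\<And>m::nat. a + of_nat m * c \<noteq> 0"
  shows "(\<forall>k::int. A a b c 0 k = (if k = 0 then 1 else 0))
    \<and> (\<forall>n::nat. n \<ge> 1 \<longrightarrow> A a b c n 0 = T a b c 0 * A a b c (n - 1) 1)
    \<and> (\<forall>(n::nat) (k::nat). n \<ge> 1 \<longrightarrow> k \<ge> 1 \<longrightarrow>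
          A a b c n (int k) = A a b c (n - 1) (int k - 1) + T a b c k * A a b c (n - 1) (int k + 1))"
proof (intro conjI allI impI)
  fix k :: int
  show "A a b c 0 k = (if k = 0 then 1 else 0)"
    by (auto simp: A_def ibinom_def u_def)
next
  fix n :: nat assume n: "n \<ge> 1"
  show "A a b c n 0 = T a b c 0 * A a b c (n - 1) 1"
  proof (cases "even n")
    case True
    then obtain m0 where "n = 2 * m0" by (rule evenE)
    then obtain m where m: "n = 2 * Suc m" using n by (cases m0) auto
    have e1: "A a b c n 0 = A a b c (2 * Suc m) (2 * int 0)" using m by simp
    have e2: "A a b c (n - 1) 1 = A a b c (2 * m + 1) (2 * int 0 + 1)" using m by simp
    have "rp c a (Suc m) = a * rp c (a + c) m" by (rule rp_Suc1) simp
    moreover have "rp c b (Suc m) = b * rp c (b + c) m" by (rule rp_Suc1) simp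
    moreover have "rp c (a + c) m \<noteq> 0" by (rule rp_nz[OF nz, of _ 1]) simp
    moreover have "a \<noteq> 0" using nz[of 0] by simp
    ultimately show ?thesis unfolding e1 e2 A_even A_odd
      by (simp add: u_rp T_def)
  next
    case False
    then show ?thesis using n by (simp add: A_par)
  qed
next
  fix n k :: nat assume n: "n \<ge> 1" and k: "k \<ge> 1"
  show "A a b c n (int k) = A a b c (n - 1) (int k - 1) + T a b c k * A a b c (n - 1) (int k + 1)"
  proof (cases "even n = even k")
    case False
    then show ?thesis using n k by (auto simp: A_par)
  next
    case True
    show ?thesis
    proof (cases "even n")
      case ev: True
      with True have evk: "even k" by simp
      from ev obtain m0 where "n = 2 * m0" by (rule evenE)
      then obtain M where M: "n = 2 * Suc M" using n by (cases m0) auto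
      from evk obtain l0 where "k = 2 * l0" by (rule evenE)
      then obtain l where l: "k = 2 * Suc l" using k by (cases l0) auto
      have e1: "A a b c n (int k) = A a b c (2 * Suc M) (2 * int (Suc l))" using M l by simp
      have e2: "A a b c (n - 1) (int k - 1) = A a b c (2 * M + 1) (2 * int l + 1)" using M l by (simp add: add.commute)
      have e3: "A a b c (n - 1) (int k + 1) = A a b c (2 * M + 1) (2 * int (Suc l) + 1)" using M l by simp
      show ?thesis unfolding e1 e2 e3 A_even A_odd unfolding l by (rule even_step[OF nz])
    next
      case od: False
      with True have odk: "odd k" by simp
      from od obtain m where m: "n = 2 * m + 1" by (rule oddE)
      from odk obtain l where l: "k = 2 * l + 1" by (rule oddE)
      have e1: "A a b c n (int k) = A a b c (2 * m + 1) (2 * int l + 1)" using m l by (simp add: add.commute)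
      have e2: "A a b c (n - 1) (int k - 1) = A a b c (2 * m) (2 * int l)" using m l by simp
      have e3: "A a b c (n - 1) (int k + 1) = A a b c (2 * m) (2 * int (Suc l))" using m l by simp
      show ?thesis unfolding e1 e2 e3 A_even A_odd unfolding l by (rule odd_step[OF nz])
    qed
  qed
qed

end
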